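(* Let $g_i\neq0$, $\sigma_i>0$, $M\ge1$, and let $\tilde g_{1,i},\dots,\tilde g_{M,i}$ be independent real random variables, each with mean $g_i$, variance at most $\sigma_i^2$, and with $\tilde g_{m,i}-g_i$ having a unimodal distribution symmetric about $0$. Then $$|g_i|\;\mathbb{P}\Big[\mathrm{sign}\Big(\sum_{m=1}^M\mathrm{sign}(\tilde g_{m,i})\Big)\neq\mathrm{sign}(g_i)\Big]\le\frac{\sigma_i}{\sqrt M}.$$ More precisely, if $Z$ denotes the number of $m$ with $\mathrm{sign}(\tilde g_{m,i})=\mathrm{sign}(g_i)$ and $S=|g_i|/\sigma_i$, then $\mathbb{P}[Z\le M/2]\le\frac{1}{\sqrt M\,S}$.
   Context: $\mathrm{sign}(t)=1$ for $t>0$, $-1$ for $t<0$, $0$ for $t=0$. A real distribution is unimodal if its distribution function is convex on $(-\infty,\nu)$ and concave on $(\nu,\infty)$ for some mode $\nu$. *)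

theory Defs
  imports "HOL-Probability.Probability"
begin

definition unimodal :: "real measure \<Rightarrow> bool" where
  "unimodal \<mu> \<longleftrightarrow> (\<exists>\<nu>. convex_on {..<\<nu>} (cdf \<mu>) \<and> concave_on {\<nu><..} (cdf \<mu>))"

definition symmetric0 :: "real measure \<Rightarrow> bool" where
  "symmetric0 \<mu> \<longleftrightarrow> distr \<mu> borel uminus = \<mu>"

end

theory Submission
  imports Defs
begin

lemma amgm3: fixes q x :: real assumes "0 \<le> q" "0 \<le> x"
  shows "27*q*x^2 \<le> 4*(q+x)^3"
proof -
  have "4*(q+x)^3 - 27*q*x^2 = (x-2*q)^2*(4*x+q)" by (simp add: power2_eq_square power3_eq_cube algebra_simps)
  moreover have "(x-2*q)^2*(4*x+q) \<ge> 0" using assms by simp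
  ultimately show ?thesis by linarith
qed

lemma polyP: fixes q d x :: real assumes "0 < q" "0 < x" "x \<le> d" "d \<le> 2*q"
  shows "x^2*(q+d)^3 \<le> d^2*(q+x)^3"
proof -
  have e: "d^2*(q+x)^3 - x^2*(q+d)^3 = (d-x)*(q^3*(d+x) + 3*q^2*d*x - d^2*x^2)"
    by (simp add: power2_eq_square power3_eq_cube algebra_simps)
  have h1: "d*x \<le> q*(d+x)"
  proof -
    have "d*x \<le> 2*q*x" using assms by (intro mult_right_mono) auto
    moreover have "d*x \<le> 2*q*d" using assms by (simp add: mult_left_mono mult.commute)
    ultimately show ?thesis by (simp add: algebra_simps)
  qed
  have h2: "d*x \<le> 4*q^2"
  proof -
    have "d*x \<le> (2*q)*(2*q)" using assms by (intro mult_mono) auto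
    thus ?thesis by (simp add: power2_eq_square)
  qed
  have "q^3*(d+x) \<ge> q^2*(d*x)" using h1 assms
    by (metis mult_left_mono power3_eq_cube power2_eq_square mult.assoc zero_le_power2 less_imp_le)
  moreover have "(d*x)*(4*q^2 - d*x) \<ge> 0" using h2 assms by simp
  ultimately have "q^3*(d+x) + 3*q^2*d*x - d^2*x^2 \<ge> 0" by (simp add: power2_eq_square algebra_simps)
  hence "(d-x)*(q^3*(d+x) + 3*q^2*d*x - d^2*x^2) \<ge> 0" using assms by simp
  thus ?thesis using e by linarith
qed

lemma poly: fixes q x :: real assumes "0 < q" "0 < x" "x \<le> 1/2 - q"
  shows "3*x^2*q*(1-q) \<le> 8*(q+x)^3*(1/2-q)^2"
proof (cases "1/2 - q \<le> 2*q")
  case True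
  define d where "d = 1/2 - q"
  have "x^2*(q+d)^3 \<le> d^2*(q+x)^3" using polyP[of q x d] True assms d_def by auto
  moreover have "(q+d)^3 = 1/8" by (simp add: d_def power3_eq_cube)
  ultimately have a: "x^2 \<le> 8*d^2*(q+x)^3" by simp
  have "0 \<le> 3*(q-1/2)^2 + 1/4" by simp
  hence "3*q*(1-q) \<le> 1" by (simp add: algebra_simps power2_eq_square)
  hence "3*x^2*q*(1-q) \<le> x^2" using mult_left_mono[of "3*q*(1-q)" 1 "x^2"] by (simp add: algebra_simps)
  thus ?thesis using a d_def by (simp add: algebra_simps)
next
  case False
  define d where "d = 1/2 - q"
  have "27*q*x^2 \<le> 4*(q+x)^3" using amgm3 assms by simp
  hence "(27*q*x^2)*(2*d^2) \<le> (4*(q+x)^3)*(2*d^2)" by (intro mult_right_mono) auto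
  hence a: "54*q*x^2*d^2 \<le> 8*(q+x)^3*d^2" by (simp add: algebra_simps)
  have dd: "d > 1/3" using False d_def by simp
  have "q*(1-q) \<le> 18*q*d^2"
  proof -
    have "d*d \<ge> (1/3)*d" using dd by (intro mult_right_mono) auto
    hence "1 - q \<le> 18*d^2" using dd d_def unfolding power2_eq_square by linarith
    thus ?thesis using assms mult_left_mono[of "1-q" "18*d^2" q] by (simp add: algebra_simps)
  qed
  hence "3*x^2*(q*(1-q)) \<le> 3*x^2*(18*q*d^2)" by (intro mult_left_mono) auto
  thus ?thesis using a d_def by (simp add: algebra_simps)
qed



lemma subgrad:
  fixes L :: "real \<Rightarrow> real" and b :: real
  assumes cv: "convex_on {0<..} L" and b: "b > 0"
  shows "\<exists>m. \<forall>t>0. L b + m*(t-b) \<le> L t"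
proof -
  define S where "S = (\<lambda>t. (L b - L t)/(b - t)) ` {0<..<b}"
  have ne: "S \<noteq> {}" using b unfolding S_def by auto
  have up: "\<And>u y. u > b \<Longrightarrow> y \<in> S \<Longrightarrow> y \<le> (L u - L b)/(u - b)"
  proof -
    fix u y assume u: "u > b" and y: "y \<in> S"
    then obtain t where t: "0 < t" "t < b" "y = (L b - L t)/(b - t)" unfolding S_def by auto
    have "(L t - L b)/(t - b) \<le> (L b - L u)/(b - u)"
      using convex_on_slope_le[OF cv, of t u b] t u b by (smt (verit) greaterThan_iff)
    moreover have "(L b - L t)/(b - t) = (L t - L b)/(t - b)" by (simp add: divide_simps) argo
    moreover have "(L b - L u)/(b - u) = (L u - L b)/(u - b)" by (simp add: divide_simps) argo
    ultimately show "y \<le> (L u - L b)/(u - b)" using t by simp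
  qed
  have bdd: "bdd_above S" using up[of "b+1"] b unfolding bdd_above_def by auto
  define m where "m = Sup S"
  have "L b + m*(t-b) \<le> L t" if t: "t > 0" for t
  proof (cases t b rule: linorder_cases)
    case less
    have "(L b - L t)/(b - t) \<in> S" using less t unfolding S_def by auto
    hence "(L b - L t)/(b - t) \<le> m" unfolding m_def using bdd by (rule cSup_upper)
    hence "L b - L t \<le> m*(b-t)" using less by (simp add: divide_le_eq)
    thus ?thesis by (simp add: algebra_simps)
  next
    case equal thus ?thesis by simp
  next
    case greater
    have "m \<le> (L t - L b)/(t - b)" unfolding m_def using ne up[OF greater] by (rule cSup_least)
    hence "m*(t-b) \<le> L t - L b" using greater by (simp add: le_divide_eq)
    thus ?thesis by simp
  qed
  thus ?thesis by blast
qed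

lemma integral_tri:
  fixes c s :: real assumes "c > 0" "s > 0"
  shows "((\<lambda>t. 4*t*(c - s*t)) has_integral (2*c^3/(3* s^2))) {0..c/s}"
proof -
  define F where "F = (\<lambda>t::real. 2*c*t^2 - (4* s/3)*t^3)"
  have "((\<lambda>t. 4*t*(c - s*t)) has_integral (F (c/s) - F 0)) {0..c/s}"
  proof (rule fundamental_theorem_of_calculus)
    show "0 \<le> c/s" using assms by simp
    fix x :: real
    have "(F has_real_derivative (4*x*(c - s*x))) (at x within {0..c/s})"
      unfolding F_def by (rule derivative_eq_intros refl | simp add: algebra_simps power2_eq_square)+
    thus "(F has_vector_derivative (4*x*(c - s*x))) (at x within {0..c/s})"
      by (simp add: has_real_derivative_iff_has_vector_derivative)
  qed
  moreover have "F (c/s) - F 0 = 2*c^3/(3* s^2)"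
    unfolding F_def using assms by (simp add: field_simps power2_eq_square power3_eq_cube)
  ultimately show ?thesis by simp
qed




lemma ennle: fixes x y :: real assumes "x > 0 \<Longrightarrow> x \<le> y" shows "ennreal x \<le> ennreal y"
  using assms by (cases "x > 0") (auto intro: ennreal_leI simp: ennreal_neg)

lemma gauss_core:
  fixes L :: "real \<Rightarrow> real" and b V :: real
  assumes cv: "convex_on {0<..} L" and b: "b > 0" and V: "V \<ge> 0"
    and le: "\<And>t. t > 0 \<Longrightarrow> L t \<le> 1/2"
    and int: "(\<integral>\<^sup>+t. ennreal (indicator {0<..} t * (4*t*L t)) \<partial>lborel) \<le> ennreal V"
  shows "b^2 * (1/4 - (1/2 - L b)^2) \<le> 4*V*(1/2 - L b)^2"
proof (cases "L b \<le> 0")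
  case True
  have "1/2 \<le> 1/2 - L b" using True by simp
  hence "(1/2)^2 \<le> (1/2 - L b)^2" by (intro power_mono) auto
  hence "b^2 * (1/4 - (1/2 - L b)^2) \<le> 0" by (intro mult_nonneg_nonpos) (auto simp: power2_eq_square)
  also have "0 \<le> 4*V*(1/2 - L b)^2" using V by simp
  finally show ?thesis .
next
  case False
  hence q: "L b > 0" by simp
  obtain m where m: "\<And>t. t > 0 \<Longrightarrow> L b + m*(t-b) \<le> L t" using subgrad[OF cv b] by blast
  have mneg: "m < 0"
  proof (rule ccontr)
    assume "\<not> m < 0"
    hence m0: "m \<ge> 0" by simp
    define T where "T = b + (V+1)/(4*b*L b)"
    have Tb: "b \<le> T" unfolding T_def using b q V by simp
    have hi: "((\<lambda>x. 4*b*L b) has_integral (V+1)) {b..T}"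
    proof -
      have "Henstock_Kurzweil_Integration.content {b..T} *\<^sub>R (4*b*L b) = (T - b) * (4*b*L b)" using Tb by simp
      also have "\<dots> = V + 1" using b q unfolding T_def by (simp add: field_simps)
      finally show ?thesis using has_integral_const_real[of "4*b*L b" b T] by simp
    qed
    have "ennreal (V+1) = (\<integral>\<^sup>+t. ennreal (indicator {b..T} t * (4*b*L b)) \<partial>lborel)"
      using nn_integral_has_integral_lebesgue[OF _ hi] b q by simp
    also have "\<dots> \<le> (\<integral>\<^sup>+t. ennreal (indicator {0<..} t * (4*t*L t)) \<partial>lborel)"
    proof (intro nn_integral_mono ennle)
      fix t
      assume pos: "indicator {b..T} t * (4*b*L b) > 0"
      show "indicator {b..T} t * (4*b*L b) \<le> indicator {0<..} t * (4*t*L t)"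
      proof (cases "t \<in> {b..T}")
        case True
        hence t: "t \<ge> b" "t > 0" using b by auto
        have "m*(t-b) \<ge> 0" using m0 t by simp
        hence "L b \<le> L t" using m[OF t(2)] by linarith
        hence "4*b*L b \<le> 4*t*L t" using t q b by (intro mult_mono) auto
        thus ?thesis using True t by simp
      next
        case False thus ?thesis using pos by simp
      qed
    qed
    also have "\<dots> \<le> ennreal V" by (rule int)
    finally show False using V by (simp add: ennreal_le_iff)
  qed
  define s where "s = - m"
  have s: "s > 0" using mneg s_def by simp
  define c where "c = L b + s*b"
  have lin: "c - s*t \<le> L t" if "t > 0" for t
  proof -
    have "L b + m*(t-b) = c - s*t" unfolding c_def s_def by (simp add: algebra_simps)
    thus ?thesis using m[OF that] by simp
  qed
  have c0: "c > 0" unfolding c_def using q mult_pos_pos[OF s b] by linarith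
  have chalf: "c \<le> 1/2"
  proof (rule ccontr)
    assume "\<not> c \<le> 1/2"
    define t where "t = (c - 1/2)/(2* s)"
    have t: "t > 0" using \<open>\<not> c \<le> 1/2\<close> s unfolding t_def by simp
    have "s * t = (c - 1/2)/2" using s unfolding t_def by simp
    hence "c - s*t > 1/2" using \<open>\<not> c \<le> 1/2\<close> by simp
    thus False using lin[OF t] le[OF t] by simp
  qed
  have "ennreal (2*c^3/(3* s^2)) = (\<integral>\<^sup>+t. ennreal (indicator {0..c/s} t * (4*t*(c - s*t))) \<partial>lborel)"
  proof (rule nn_integral_has_integral_lebesgue[OF _ integral_tri[OF c0 s], symmetric])
    fix t assume "t \<in> {0..c/s}"
    hence "0 \<le> t" "s*t \<le> c" using s by (auto simp: field_simps)
    thus "0 \<le> 4*t*(c - s*t)" by simp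
  qed
  also have "\<dots> \<le> (\<integral>\<^sup>+t. ennreal (indicator {0<..} t * (4*t*L t)) \<partial>lborel)"
  proof (intro nn_integral_mono ennle)
    fix t
    assume pos: "indicator {0..c/s} t * (4*t*(c - s*t)) > 0"
    show "indicator {0..c/s} t * (4*t*(c - s*t)) \<le> indicator {0<..} t * (4*t*L t)"
    proof (cases "t \<in> {0<..c/s}")
      case True
      hence t: "t > 0" by auto
      have "4*t*(c - s*t) \<le> 4*t*L t" using lin[OF t] t by (intro mult_left_mono) auto
      thus ?thesis using True by simp
    next
      case False
      hence "t \<notin> {0..c/s} \<or> t = 0" by auto
      thus ?thesis using pos by (auto simp: indicator_def)
    qed
  qed
  also have "\<dots> \<le> ennreal V" by (rule int)
  finally have cV: "2*c^3/(3* s^2) \<le> V" using V by (simp add: ennreal_le_iff)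
  hence cV': "2*c^3 \<le> 3* s^2*V" using s by (simp add: divide_le_eq mult.commute)
  define q where "q = L b"
  define x where "x = s*b"
  have x: "x > 0" "x \<le> 1/2 - q" using s b chalf unfolding x_def q_def c_def by auto
  have P: "3*x^2*q*(1-q) \<le> 8*(q+x)^3*(1/2-q)^2" using poly[OF _ x] q unfolding q_def by simp
  have cq: "c = q + x" unfolding c_def q_def x_def by simp
  have "8*(q+x)^3*(1/2-q)^2 \<le> 4*(3* s^2*V)*(1/2-q)^2"
    using cV' cq by (intro mult_right_mono) (auto simp: mult.commute mult.left_commute)
  hence "3* s^2*(b^2*(q*(1-q))) \<le> 3* s^2*(4*V*(1/2-q)^2)"
    using P unfolding x_def by (simp add: power_mult_distrib algebra_simps)
  hence "b^2*(q*(1-q)) \<le> 4*V*(1/2-q)^2" using s by (simp add: ac_simps)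
  moreover have "1/4 - (1/2 - q)^2 = q*(1-q)" by (simp add: power2_eq_square algebra_simps)
  ultimately show ?thesis unfolding q_def by simp
qed



lemma convex_on_mirror:
  fixes f :: "real \<Rightarrow> real"
  assumes "convex_on {..<0} f" shows "convex_on {0<..} (\<lambda>t. f (-t))"
  unfolding convex_on_def
proof (intro conjI ballI allI impI)
  show "convex ({0<..}::real set)" by simp
  fix x y :: real and u v :: real
  assume xy: "x \<in> {0<..}" "y \<in> {0<..}" and uv: "0 \<le> u" "0 \<le> v" "u + v = 1"
  have H: "\<forall>x\<in>{..<0::real}. \<forall>y\<in>{..<0}. \<forall>u\<ge>0. \<forall>v\<ge>0. u+v=1 \<longrightarrow> f (u * x+v * y) \<le> u * f x + v * f y"
    using assms unfolding convex_on_def by simp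
  have "f (u * (-x) + v * (-y)) \<le> u * f (-x) + v * f (-y)"
    using H[rule_format, of "-x" "-y" u v] xy uv by simp
  moreover have "- (u *\<^sub>R x + v *\<^sub>R y) = u * (-x) + v * (-y)" by simp
  ultimately show "f (- (u *\<^sub>R x + v *\<^sub>R y)) \<le> u * f (- x) + v * f (- y)" by metis
qed

context prob_space begin

lemma single:
  fixes Y :: "'a \<Rightarrow> real" and a V :: real
  assumes Y[measurable]: "Y \<in> borel_measurable M" and a: "a > 0"
    and uni: "unimodal (distr M borel Y)" and sym: "symmetric0 (distr M borel Y)"
    and int2: "integrable M (\<lambda>\<omega>. (Y \<omega>)\<^sup>2)" and V: "expectation (\<lambda>\<omega>. (Y \<omega>)\<^sup>2) \<le> V"
  shows "prob {\<omega>\<in>space M. Y \<omega> \<le> -a} = prob {\<omega>\<in>space M. a \<le> Y \<omega>}"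
    and "prob {\<omega>\<in>space M. a \<le> Y \<omega>} \<le> 1/2"
    and "a^2 * (1/4 - (1/2 - prob {\<omega>\<in>space M. a \<le> Y \<omega>})^2)
           \<le> 4 * V*(1/2 - prob {\<omega>\<in>space M. a \<le> Y \<omega>})^2"
proof -
  have symA: "prob {\<omega>\<in>space M. Y \<omega> \<in> A} = prob {\<omega>\<in>space M. - Y \<omega> \<in> A}" if A: "A \<in> sets borel" for A
  proof -
    have "distr (distr M borel Y) borel uminus = distr M borel Y" using sym unfolding symmetric0_def by simp
    hence "distr M borel (\<lambda>\<omega>. - Y \<omega>) = distr M borel Y" by (subst (asm) distr_distr) (auto simp: comp_def)
    hence "measure (distr M borel (\<lambda>\<omega>. - Y \<omega>)) A = measure (distr M borel Y) A" by simp
    thus ?thesis using A by (simp add: measure_distr vimage_def Int_def conj_commute)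
  qed
  have s1: "prob {\<omega>\<in>space M. Y \<omega> \<le> -t} = prob {\<omega>\<in>space M. t \<le> Y \<omega>}" for t
    using symA[of "{..-t}"] by simp
  have s2: "prob {\<omega>\<in>space M. Y \<omega> < -t} = prob {\<omega>\<in>space M. t < Y \<omega>}" for t
    using symA[of "{..<-t}"] by simp
  show "prob {\<omega>\<in>space M. Y \<omega> \<le> -a} = prob {\<omega>\<in>space M. a \<le> Y \<omega>}" by (rule s1)
  have half: "prob {\<omega>\<in>space M. t \<le> Y \<omega>} \<le> 1/2" if t: "t > 0" for t
  proof -
    have "prob ({\<omega>\<in>space M. t \<le> Y \<omega>} \<union> {\<omega>\<in>space M. Y \<omega> \<le> -t})
        = prob {\<omega>\<in>space M. t \<le> Y \<omega>} + prob {\<omega>\<in>space M. Y \<omega> \<le> -t}"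
      using t by (intro finite_measure_Union) auto
    moreover have "prob ({\<omega>\<in>space M. t \<le> Y \<omega>} \<union> {\<omega>\<in>space M. Y \<omega> \<le> -t}) \<le> 1" by simp
    ultimately show ?thesis using s1[of t] by simp
  qed
  show "prob {\<omega>\<in>space M. a \<le> Y \<omega>} \<le> 1/2" using half a by simp
  have cdfY: "cdf (distr M borel Y) x = prob {\<omega>\<in>space M. Y \<omega> \<le> x}" for x
    unfolding cdf_def by (simp add: measure_distr vimage_def Int_def conj_commute)
  obtain L where cvL: "convex_on {0<..} L" and Lhalf: "\<And>t. t > 0 \<Longrightarrow> L t \<le> 1/2"
    and Lge: "\<And>t. 0 < t \<Longrightarrow> t < a \<Longrightarrow> prob {\<omega>\<in>space M. a \<le> Y \<omega>} \<le> L t"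
    and Lle: "\<And>t. t > 0 \<Longrightarrow> L t \<le> prob {\<omega>\<in>space M. t \<le> Y \<omega>}"
  proof -
    obtain \<nu> where cv: "convex_on {..<\<nu>} (cdf (distr M borel Y))"
      and cc: "concave_on {\<nu><..} (cdf (distr M borel Y))" using uni unfolding unimodal_def by blast
    show ?thesis
    proof (cases "\<nu> \<le> 0")
      case True
      define L where "L t = 1 - cdf (distr M borel Y) t" for t
      have L: "L t = prob {\<omega>\<in>space M. t < Y \<omega>}" for t
      proof -
        have "prob (space M - {\<omega>\<in>space M. Y \<omega> \<le> t}) = 1 - prob {\<omega>\<in>space M. Y \<omega> \<le> t}"
          by (rule prob_compl) simp
        moreover have "space M - {\<omega>\<in>space M. Y \<omega> \<le> t} = {\<omega>\<in>space M. t < Y \<omega>}" by auto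
        ultimately show ?thesis unfolding L_def cdfY by simp
      qed
      have "convex_on {0<..} (\<lambda>t. - cdf (distr M borel Y) t)"
        by (rule convex_on_subset[OF cc[unfolded concave_on_def]]) (use True in auto)
      hence "convex_on {0<..} (\<lambda>t. 1 + - cdf (distr M borel Y) t)"
        by (intro convex_on_add) (auto simp: convex_on_const)
      hence c1: "convex_on {0<..} L" unfolding L_def by simp
      show ?thesis
      proof (rule that[OF c1])
        fix t :: real assume t: "t > 0"
        have "L t \<le> prob {\<omega>\<in>space M. t \<le> Y \<omega>}" unfolding L by (rule finite_measure_mono) auto
        thus "L t \<le> prob {\<omega>\<in>space M. t \<le> Y \<omega>}" .
        thus "L t \<le> 1/2" using half[OF t] by simp
      next
        fix t assume "0 < t" "t < a"
        thus "prob {\<omega>\<in>space M. a \<le> Y \<omega>} \<le> L t" unfolding L by (intro finite_measure_mono) auto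
      qed
    next
      case False
      define L where "L t = cdf (distr M borel Y) (-t)" for t
      have L: "L t = prob {\<omega>\<in>space M. t \<le> Y \<omega>}" for t unfolding L_def cdfY s1 ..
      have "convex_on {..<0} (cdf (distr M borel Y))"
        by (rule convex_on_subset[OF cv]) (use False in auto)
      hence c1: "convex_on {0<..} L" unfolding L_def by (rule convex_on_mirror)
      show ?thesis
      proof (rule that[OF c1])
        fix t :: real assume t: "t > 0"
        show "L t \<le> prob {\<omega>\<in>space M. t \<le> Y \<omega>}" unfolding L ..
        show "L t \<le> 1/2" using half[OF t] unfolding L .
      next
        fix t assume "0 < t" "t < a"
        thus "prob {\<omega>\<in>space M. a \<le> Y \<omega>} \<le> L t" unfolding L by (intro finite_measure_mono) auto
      qed
    qed
  qed
  have "0 \<le> expectation (\<lambda>\<omega>. (Y \<omega>)\<^sup>2)" by (intro integral_nonneg_AE) simp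
  hence V0: "0 \<le> V" using V by linarith
  have key: "(\<integral>\<^sup>+t. ennreal (indicator {0<..} t * (4 * t * L t)) \<partial>lborel) \<le> ennreal V"
  proof -
    have "(\<integral>\<^sup>+t. ennreal (indicator {0<..} t * (4 * t * L t)) \<partial>lborel)
        \<le> (\<integral>\<^sup>+t. (\<integral>\<^sup>+\<omega>. ennreal (indicator {0..\<bar>Y \<omega>\<bar>} t * (2 * t)) \<partial>M) \<partial>lborel)"
    proof (intro nn_integral_mono)
      fix t :: real
      show "ennreal (indicator {0<..} t * (4 * t * L t)) \<le> (\<integral>\<^sup>+\<omega>. ennreal (indicator {0..\<bar>Y \<omega>\<bar>} t * (2 * t)) \<partial>M)"
      proof (cases "t > 0")
        case False then show ?thesis by simp
      next
        case True
        have "(\<integral>\<^sup>+\<omega>. ennreal (indicator {0..\<bar>Y \<omega>\<bar>} t * (2 * t)) \<partial>M)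
            = (\<integral>\<^sup>+\<omega>. ennreal (2 * t) * indicator {\<omega>\<in>space M. t \<le> \<bar>Y \<omega>\<bar>} \<omega> \<partial>M)"
          by (intro nn_integral_cong) (use True in \<open>auto simp: indicator_def\<close>)
        also have "\<dots> = ennreal (2 * t) * emeasure M {\<omega>\<in>space M. t \<le> \<bar>Y \<omega>\<bar>}"
          by (rule nn_integral_cmult_indicator) simp
        also have "\<dots> = ennreal (2 * t * prob {\<omega>\<in>space M. t \<le> \<bar>Y \<omega>\<bar>})"
          using True by (simp add: emeasure_eq_measure ennreal_mult)
        finally have eq: "(\<integral>\<^sup>+\<omega>. ennreal (indicator {0..\<bar>Y \<omega>\<bar>} t * (2 * t)) \<partial>M) = ennreal (2 * t * prob {\<omega>\<in>space M. t \<le> \<bar>Y \<omega>\<bar>})" .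
        have "{\<omega>\<in>space M. t \<le> \<bar>Y \<omega>\<bar>} = {\<omega>\<in>space M. t \<le> Y \<omega>} \<union> {\<omega>\<in>space M. Y \<omega> \<le> -t}" by auto
        moreover have "prob ({\<omega>\<in>space M. t \<le> Y \<omega>} \<union> {\<omega>\<in>space M. Y \<omega> \<le> -t})
          = prob {\<omega>\<in>space M. t \<le> Y \<omega>} + prob {\<omega>\<in>space M. Y \<omega> \<le> -t}"
          using True by (intro finite_measure_Union) auto
        ultimately have "prob {\<omega>\<in>space M. t \<le> \<bar>Y \<omega>\<bar>} = 2 * prob {\<omega>\<in>space M. t \<le> Y \<omega>}" using s1[of t] by simp
        hence "4 * t * L t \<le> 2 * t * prob {\<omega>\<in>space M. t \<le> \<bar>Y \<omega>\<bar>}" using Lle[OF True] True by simp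
        thus ?thesis unfolding eq using True by (intro ennreal_leI) simp
      qed
    qed
    also have "\<dots> = (\<integral>\<^sup>+\<omega>. (\<integral>\<^sup>+t. ennreal (indicator {0..\<bar>Y \<omega>\<bar>} t * (2 * t)) \<partial>lborel) \<partial>M)"
    proof -
      interpret pair_sigma_finite M lborel ..
      show ?thesis
      proof (rule Fubini')
        have "(\<lambda>(\<omega>, t). ennreal (if 0 \<le> t \<and> t \<le> \<bar>Y \<omega>\<bar> then 2 * t else 0)) \<in> borel_measurable (M \<Otimes>\<^sub>M lborel)"
          by measurable
        moreover have "(\<lambda>(\<omega>, t). ennreal (indicator {0..\<bar>Y \<omega>\<bar>} t * (2 * t))) = (\<lambda>(\<omega>, t). ennreal (if 0 \<le> t \<and> t \<le> \<bar>Y \<omega>\<bar> then 2 * t else 0))"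
          by (auto simp: indicator_def fun_eq_iff)
        ultimately show "(\<lambda>(\<omega>, t). ennreal (indicator {0..\<bar>Y \<omega>\<bar>} t * (2 * t))) \<in> borel_measurable (M \<Otimes>\<^sub>M lborel)" by simp
      qed
    qed
    also have "\<dots> = (\<integral>\<^sup>+\<omega>. ennreal ((Y \<omega>)\<^sup>2) \<partial>M)"
    proof (intro nn_integral_cong)
      fix \<omega>
      define y where "y = \<bar>Y \<omega>\<bar>"
      have "((\<lambda>t. 2 * t) has_integral ((\<lambda>t. t\<^sup>2) y - (\<lambda>t. t\<^sup>2) 0)) {0..y}"
      proof (rule fundamental_theorem_of_calculus)
        show "0 \<le> y" unfolding y_def by simp
        fix x :: real
        have "((\<lambda>t. t\<^sup>2) has_real_derivative (2 * x)) (at x within {0..y})"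
          by (rule derivative_eq_intros refl | simp)+
        thus "((\<lambda>t. t\<^sup>2) has_vector_derivative (2 * x)) (at x within {0..y})"
          by (simp add: has_real_derivative_iff_has_vector_derivative)
      qed
      hence "((\<lambda>t. 2 * t) has_integral (Y \<omega>)\<^sup>2) {0..y}" unfolding y_def by simp
      hence "(\<integral>\<^sup>+t. ennreal (indicator {0..y} t * (2 * t)) \<partial>lborel) = ennreal ((Y \<omega>)\<^sup>2)"
        by (rule nn_integral_has_integral_lebesgue[rotated]) auto
      thus "(\<integral>\<^sup>+t. ennreal (indicator {0..\<bar>Y \<omega>\<bar>} t * (2 * t)) \<partial>lborel) = ennreal ((Y \<omega>)\<^sup>2)"
        unfolding y_def .
    qed
    also have "\<dots> = ennreal (expectation (\<lambda>\<omega>. (Y \<omega>)\<^sup>2))"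
      by (rule nn_integral_eq_integral[OF int2]) simp
    also have "\<dots> \<le> ennreal V" using V by (rule ennreal_leI)
    finally show ?thesis .
  qed
  define q where "q = prob {\<omega>\<in>space M. a \<le> Y \<omega>}"
  have q0: "0 \<le> q" "q \<le> 1/2" unfolding q_def using half a by auto
  define K where "K = 1/4 - (1/2 - q)\<^sup>2"
  define R where "R = 4 * V * (1/2 - q)\<^sup>2"
  have R0: "0 \<le> R" unfolding R_def using V0 by simp
  have bK: "b\<^sup>2 * K \<le> R" if b: "0 < b" "b < a" for b
  proof -
    have g: "b^2 * (1/4 - (1/2 - L b)^2) \<le> 4 * V * (1/2 - L b)^2"
      by (rule gauss_core[OF cvL b(1) V0 Lhalf key])
    have db: "0 \<le> 1/2 - L b" "1/2 - L b \<le> 1/2 - q" using Lhalf[OF b(1)] Lge[OF b] unfolding q_def by auto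
    hence sq: "(1/2 - L b)^2 \<le> (1/2 - q)^2" by (intro power_mono) auto
    have "b\<^sup>2 * K \<le> b^2 * (1/4 - (1/2 - L b)^2)" unfolding K_def using sq by (intro mult_left_mono) auto
    also have "\<dots> \<le> 4 * V * (1/2 - L b)^2" by (rule g)
    also have "\<dots> \<le> R" unfolding R_def using sq V0 by (intro mult_left_mono) auto
    finally show ?thesis .
  qed
  have "a\<^sup>2 * K \<le> R"
  proof (cases "K > 0")
    case False
    hence "a\<^sup>2 * K \<le> 0" by (intro mult_nonneg_nonpos) auto
    thus ?thesis using R0 by simp
  next
    case True
    have "a \<le> sqrt (R / K)"
    proof (rule dense_le_bounded[OF a])
      fix w assume "0 < w" "w < a"
      hence "w\<^sup>2 * K \<le> R" by (rule bK)
      hence "w\<^sup>2 \<le> R / K" using True by (simp add: le_divide_eq)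
      thus "w \<le> sqrt (R / K)" by (rule real_le_rsqrt)
    qed
    hence "a\<^sup>2 \<le> (sqrt (R / K))\<^sup>2" using a by (intro power_mono) auto
    also have "\<dots> = R / K" using R0 True by simp
    finally show ?thesis using True by (simp add: le_divide_eq)
  qed
  thus "a^2 * (1/4 - (1/2 - prob {\<omega>\<in>space M. a \<le> Y \<omega>})^2)
           \<le> 4*V*(1/2 - prob {\<omega>\<in>space M. a \<le> Y \<omega>})^2" unfolding K_def R_def q_def .
qed

end



lemma final_alg:
  fixes d :: "nat \<Rightarrow> real" and I :: "nat set" and a \<sigma> :: real and N :: nat
  assumes fin: "finite I" and card: "card I = N" and N: "N \<ge> 1" and a: "a > 0" and s: "\<sigma> > 0"
    and d0: "\<And>i. i \<in> I \<Longrightarrow> 0 \<le> d i" and d1: "\<And>i. i \<in> I \<Longrightarrow> d i \<le> 1/2"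
    and dg: "\<And>i. i \<in> I \<Longrightarrow> a\<^sup>2 * (1/4 - (d i)\<^sup>2) \<le> 4 * \<sigma>\<^sup>2 * (d i)\<^sup>2"
  shows "(\<Sum>i\<in>I. d i) > 0 \<and> (\<exists>u\<ge>0. (u\<^sup>2 + (\<Sum>i\<in>I. 1/4 - (d i)\<^sup>2)) / (u + (\<Sum>i\<in>I. d i))\<^sup>2 \<le> \<sigma> / (a * sqrt (real N)))"
proof -
  define n where "n = real N"
  have n: "n \<ge> 1" using N unfolding n_def by simp
  define \<delta>2 where "\<delta>2 = a\<^sup>2 / (4 * (a\<^sup>2 + 4 * \<sigma>\<^sup>2))"
  have A: "a\<^sup>2 + 4 * \<sigma>\<^sup>2 > 0" using a s by (simp add: add_pos_pos)
  have \<delta>2: "\<delta>2 \<le> x\<^sup>2" if "a\<^sup>2 * (1/4 - x\<^sup>2) \<le> 4 * \<sigma>\<^sup>2 * x\<^sup>2" for x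
  proof -
    have "a\<^sup>2 \<le> 4 * ((a\<^sup>2 + 4 * \<sigma>\<^sup>2) * x\<^sup>2)" using that by (simp add: algebra_simps)
    thus ?thesis unfolding \<delta>2_def using A by (simp add: divide_le_eq algebra_simps)
  qed
  have \<delta>pos: "sqrt \<delta>2 > 0" unfolding \<delta>2_def using a A by simp
  have di: "sqrt \<delta>2 \<le> d i" if "i \<in> I" for i
    using real_le_lsqrt[OF d0[OF that] \<delta>2[OF dg[OF that]]] .
  define D where "D = (\<Sum>i\<in>I. d i)"
  have "(\<Sum>i\<in>I. sqrt \<delta>2) \<le> D" unfolding D_def using di by (rule sum_mono)
  hence Dge: "n * sqrt \<delta>2 \<le> D" using card unfolding n_def by simp
  have "n * sqrt \<delta>2 > 0" using \<delta>pos n by simp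
  hence Dpos: "D > 0" using Dge by linarith
  define db where "db = D / n"
  have db: "sqrt \<delta>2 \<le> db" unfolding db_def using Dge n by (simp add: le_divide_eq mult.commute)
  have dbpos: "db > 0" using db \<delta>pos by linarith
  have "(\<Sum>i\<in>I. d i) \<le> (\<Sum>i\<in>I. 1/2)" using d1 by (rule sum_mono)
  hence dbh: "db \<le> 1/2" unfolding db_def D_def using card n unfolding n_def by (simp add: divide_le_eq)
  have "\<delta>2 \<le> db\<^sup>2"
  proof -
    have "(sqrt \<delta>2)\<^sup>2 \<le> db\<^sup>2" using db \<delta>pos by (intro power_mono) auto
    moreover have "\<delta>2 \<ge> 0" unfolding \<delta>2_def using A by simp
    ultimately show ?thesis by simp
  qed
  hence "a\<^sup>2 \<le> 4 * ((a\<^sup>2 + 4 * \<sigma>\<^sup>2) * db\<^sup>2)" unfolding \<delta>2_def using A by (simp add: divide_le_eq algebra_simps)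
  hence vb: "a\<^sup>2 * (1/4 - db\<^sup>2) \<le> 4 * \<sigma>\<^sup>2 * db\<^sup>2" by (simp add: algebra_simps)
  define v where "v = 1/4 - db\<^sup>2"
  have "db\<^sup>2 \<le> (1/2)\<^sup>2" using dbh dbpos by (intro power_mono) auto
  hence v0: "v \<ge> 0" unfolding v_def by (simp add: power2_eq_square)
  define V where "V = (\<Sum>i\<in>I. 1/4 - (d i)\<^sup>2)"
  have cs: "0 \<le> (\<Sum>i\<in>I. (d i - db)\<^sup>2)" by (intro sum_nonneg) auto
  also have "(\<Sum>i\<in>I. (d i - db)\<^sup>2) = (\<Sum>i\<in>I. (d i)\<^sup>2) - 2 * db * D + n * db\<^sup>2"
    unfolding D_def power2_diff using card unfolding n_def
    by (simp add: sum.distrib sum_subtractf sum_distrib_left sum_distrib_right algebra_simps)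
  finally have "n * db\<^sup>2 \<le> (\<Sum>i\<in>I. (d i)\<^sup>2)" using n unfolding db_def by (simp add: power2_eq_square field_simps)
  hence VV: "V \<le> n * v" unfolding V_def v_def using card unfolding n_def by (simp add: sum_subtractf algebra_simps)
  define u where "u = v / db"
  have u0: "u \<ge> 0" unfolding u_def using v0 dbpos by simp
  have Dn: "D = n * db" unfolding db_def using n by simp
  have den: "u + D > 0" using u0 Dpos by simp
  have "(u\<^sup>2 + V) / (u + D)\<^sup>2 \<le> (u\<^sup>2 + n * v) / (u + D)\<^sup>2"
    using VV den by (intro divide_right_mono) auto
  also have "\<dots> = v / (v + n * db\<^sup>2)"
  proof -
    have p: "v + n * db\<^sup>2 > 0" using v0 n dbpos by (simp add: add_nonneg_pos)
    define P where "P = v + n * db\<^sup>2"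
    have e1: "u + D = P / db" unfolding P_def u_def Dn using dbpos by (simp add: field_simps power2_eq_square)
    have e2: "u\<^sup>2 + n * v = v * P / db\<^sup>2" unfolding P_def u_def using dbpos by (simp add: field_simps power2_eq_square)
    have "(u\<^sup>2 + n * v) / (u + D)\<^sup>2 = (v * P / db\<^sup>2) / ((P / db)\<^sup>2)" by (simp only: e1 e2)
    also have "\<dots> = v / P" using p dbpos unfolding P_def[symmetric] by (simp add: power_divide power2_eq_square)
    finally show ?thesis unfolding P_def .
  qed
  also have "\<dots> \<le> \<sigma> / (a * sqrt n)"
  proof -
    define P where "P = v + n * db\<^sup>2"
    have p: "P > 0" unfolding P_def using v0 n dbpos by (simp add: add_nonneg_pos)
    have sn: "sqrt n > 0" using n by simp
    have sq: "(sqrt n)\<^sup>2 = n" using n by simp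
    have "(v * a * sqrt n)\<^sup>2 = v * n * (a\<^sup>2 * v)"
      by (simp only: power_mult_distrib sq) (simp add: power2_eq_square)
    also have "\<dots> \<le> v * n * (4 * \<sigma>\<^sup>2 * db\<^sup>2)"
    proof (rule mult_left_mono)
      show "a\<^sup>2 * v \<le> 4 * \<sigma>\<^sup>2 * db\<^sup>2" using vb unfolding v_def .
      show "0 \<le> v * n" using v0 n by simp
    qed
    also have "\<dots> = \<sigma>\<^sup>2 * (4 * v * (n * db\<^sup>2))" by (simp only: mult_ac)
    also have "\<dots> \<le> \<sigma>\<^sup>2 * P\<^sup>2"
    proof (rule mult_left_mono)
      have "0 \<le> (v - n * db\<^sup>2)\<^sup>2" by simp
      moreover have "P\<^sup>2 - 4 * v * (n * db\<^sup>2) = (v - n * db\<^sup>2)\<^sup>2"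
        unfolding P_def by (simp add: power2_eq_square algebra_simps)
      ultimately show "4 * v * (n * db\<^sup>2) \<le> P\<^sup>2" by linarith
    qed simp
    also have "\<dots> = (\<sigma> * P)\<^sup>2" by (simp only: power_mult_distrib)
    finally have calc: "(v * a * sqrt n)\<^sup>2 \<le> (\<sigma> * P)\<^sup>2" .
    have sp: "0 \<le> \<sigma> * P" using s p by simp
    have vv: "v * (a * sqrt n) \<le> \<sigma> * P" using power2_le_imp_le[OF calc sp] by (simp only: mult.assoc)
    have aq: "a * sqrt n > 0" using a sn by simp
    have "v \<le> (\<sigma> * P) / (a * sqrt n)" using vv by (simp only: pos_le_divide_eq[OF aq])
    hence "v \<le> \<sigma> / (a * sqrt n) * P" by (simp only: times_divide_eq_left)
    hence "v / P \<le> \<sigma> / (a * sqrt n)" by (simp only: pos_divide_le_eq[OF p])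
    thus ?thesis unfolding P_def .
  qed
  finally show ?thesis using Dpos u0 unfolding D_def V_def n_def by blast
qed



context prob_space begin

lemma ind_sq_exp:
  assumes A: "A \<in> events"
  shows "expectation (\<lambda>\<omega>. indicator A \<omega> - c) = prob A - c"
    and "expectation (\<lambda>\<omega>. (indicator A \<omega> - c)\<^sup>2) = prob A * (1 - 2 * c) + c\<^sup>2"
    and "integrable M (\<lambda>\<omega>. indicator A \<omega> - c)"
proof -
  have iA: "integrable M (indicator A :: 'a \<Rightarrow> real)"
    using A by (intro integrable_real_indicator) (auto simp: less_top[symmetric])
  show "integrable M (\<lambda>\<omega>. indicator A \<omega> - c)" using iA by auto
  show "expectation (\<lambda>\<omega>. indicator A \<omega> - c) = prob A - c"
    using iA A by (simp add: prob_space)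
  have "(\<lambda>\<omega>. (indicator A \<omega> - c)\<^sup>2) = (\<lambda>\<omega>. (1 - 2 * c) * indicator A \<omega> + c\<^sup>2)"
    by (auto simp: fun_eq_iff indicator_def power2_eq_square algebra_simps)
  moreover have "expectation (\<lambda>\<omega>. (1 - 2 * c) * indicator A \<omega> + c\<^sup>2) = (1 - 2 * c) * prob A + c\<^sup>2"
    using iA A by (simp add: prob_space)
  ultimately show "expectation (\<lambda>\<omega>. (indicator A \<omega> - c)\<^sup>2) = prob A * (1 - 2 * c) + c\<^sup>2" by simp
qed

lemma main_prob:
  fixes X :: "nat \<Rightarrow> 'a \<Rightarrow> real" and g \<sigma> :: real and N :: nat
  assumes g: "g \<noteq> 0" and s: "\<sigma> > 0" and N: "N \<ge> 1"
    and Xm: "\<And>m. m \<in> {1..N} \<Longrightarrow> X m \<in> borel_measurable M"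
    and ind: "indep_vars (\<lambda>_. borel) X {1..N}"
    and qh: "\<And>m. m \<in> {1..N} \<Longrightarrow> prob {\<omega>\<in>space M. sgn (X m \<omega>) \<noteq> sgn g} \<le> 1/2"
    and qb: "\<And>m. m \<in> {1..N} \<Longrightarrow> g\<^sup>2 * (1/4 - (1/2 - prob {\<omega>\<in>space M. sgn (X m \<omega>) \<noteq> sgn g})\<^sup>2)
                 \<le> 4 * \<sigma>\<^sup>2 * (1/2 - prob {\<omega>\<in>space M. sgn (X m \<omega>) \<noteq> sgn g})\<^sup>2"
  shows "prob {\<omega>\<in>space M. real (card {m \<in> {1..N}. sgn (X m \<omega>) = sgn g}) \<le> real N / 2}
           \<le> \<sigma> / (\<bar>g\<bar> * sqrt (real N))"
proof -
  define I where "I = {1..N}"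
  have finI: "finite I" unfolding I_def by simp
  have cardI: "card I = N" unfolding I_def by simp
  define C where "C m = {\<omega>\<in>space M. sgn (X m \<omega>) = sgn g}" for m
  have Cev: "C m \<in> events" if "m \<in> I" for m
  proof -
    have [measurable]: "X m \<in> borel_measurable M" using Xm that unfolding I_def by simp
    show ?thesis unfolding C_def by measurable
  qed
  define p where "p m = prob (C m)" for m
  define d where "d m = p m - 1/2" for m
  have pq: "p m = 1 - prob {\<omega>\<in>space M. sgn (X m \<omega>) \<noteq> sgn g}" if "m \<in> I" for m
  proof -
    have "prob (space M - C m) = 1 - prob (C m)" using Cev[OF that] by (rule prob_compl)
    moreover have "space M - C m = {\<omega>\<in>space M. sgn (X m \<omega>) \<noteq> sgn g}" unfolding C_def by auto
    ultimately show ?thesis unfolding p_def by simp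
  qed
  have dd: "d m = 1/2 - prob {\<omega>\<in>space M. sgn (X m \<omega>) \<noteq> sgn g}" if "m \<in> I" for m
    unfolding d_def using pq[OF that] by simp
  have d0: "0 \<le> d m" if "m \<in> I" for m using qh[of m] that dd[OF that] unfolding I_def by simp
  have d1: "d m \<le> 1/2" if "m \<in> I" for m using dd[OF that] by simp
  have dg: "\<bar>g\<bar>\<^sup>2 * (1/4 - (d m)\<^sup>2) \<le> 4 * \<sigma>\<^sup>2 * (d m)\<^sup>2" if "m \<in> I" for m
    using qb[of m] that dd[OF that] unfolding I_def by simp
  have ga: "\<bar>g\<bar> > 0" using g by simp
  have FA: "(\<Sum>i\<in>I. d i) > 0 \<and> (\<exists>u\<ge>0. (u\<^sup>2 + (\<Sum>i\<in>I. 1/4 - (d i)\<^sup>2)) / (u + (\<Sum>i\<in>I. d i))\<^sup>2 \<le> \<sigma> / (\<bar>g\<bar> * sqrt (real N)))"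
    apply (rule final_alg[OF finI cardI N ga s])
    using d0 apply blast
    using d1 apply blast
    using dg by blast
  obtain u where Dpos: "(\<Sum>i\<in>I. d i) > 0" and u0: "u \<ge> 0"
    and fin: "(u\<^sup>2 + (\<Sum>i\<in>I. 1/4 - (d i)\<^sup>2)) / (u + (\<Sum>i\<in>I. d i))\<^sup>2 \<le> \<sigma> / (\<bar>g\<bar> * sqrt (real N))"
    using FA by blast
  define D where "D = (\<Sum>i\<in>I. d i)"
  define h where "h m \<omega> = indicator (C m) \<omega> - p m" for m \<omega>
  have h_int: "integrable M (h m)" if "m \<in> I" for m
    unfolding h_def using ind_sq_exp(3)[OF Cev[OF that]] .
  have h_meas: "h m \<in> borel_measurable M" if "m \<in> I" for m
    using h_int[OF that] by (rule borel_measurable_integrable)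
  have h_bd: "\<bar>h m \<omega>\<bar> \<le> 1" if "m \<in> I" for m \<omega>
  proof -
    have "0 \<le> p m" "p m \<le> 1" unfolding p_def by auto
    thus ?thesis unfolding h_def by (auto simp: indicator_def)
  qed
  have hh_int: "integrable M (\<lambda>\<omega>. h i \<omega> * h j \<omega>)" if "i \<in> I" "j \<in> I" for i j
  proof (rule integrable_const_bound[where B=1])
    show "AE x in M. norm (h i x * h j x) \<le> 1"
    proof (rule AE_I2)
      fix x
      have "\<bar>h i x\<bar> * \<bar>h j x\<bar> \<le> 1 * 1" using h_bd that by (intro mult_mono) auto
      thus "norm (h i x * h j x) \<le> 1" by (simp add: abs_mult)
    qed
    show "(\<lambda>\<omega>. h i \<omega> * h j \<omega>) \<in> borel_measurable M" using h_meas that by auto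
  qed
  have Eh: "expectation (h m) = 0" if "m \<in> I" for m
    unfolding h_def using ind_sq_exp(1)[OF Cev[OF that]] unfolding p_def by simp
  have Ehh: "expectation (\<lambda>\<omega>. h m \<omega> * h m \<omega>) = 1/4 - (d m)\<^sup>2" if "m \<in> I" for m
  proof -
    have "expectation (\<lambda>\<omega>. h m \<omega> * h m \<omega>) = expectation (\<lambda>\<omega>. (indicator (C m) \<omega> - p m)\<^sup>2)"
      unfolding h_def by (simp add: power2_eq_square)
    also have "\<dots> = p m * (1 - 2 * p m) + (p m)\<^sup>2" using ind_sq_exp(2)[OF Cev[OF that]] unfolding p_def by simp
    also have "\<dots> = 1/4 - (d m)\<^sup>2" unfolding d_def by (simp add: power2_eq_square algebra_simps)
    finally show ?thesis .
  qed
  have Ehij: "expectation (\<lambda>\<omega>. h i \<omega> * h j \<omega>) = 0" if "i \<in> I" "j \<in> I" "i \<noteq> j" for i j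
  proof -
    define Yf where "Yf m y = (if sgn y = sgn g then 1 else 0) - p m" for m and y :: real
    have Ym: "Yf m \<in> borel \<rightarrow>\<^sub>M borel" for m unfolding Yf_def by measurable
    have ind2: "indep_vars (\<lambda>_. borel) (\<lambda>m \<omega>. Yf m (X m \<omega>)) {1..N}"
      by (rule indep_vars_compose2[OF ind]) (rule Ym)
    hence ind3: "indep_vars (\<lambda>_. borel) (\<lambda>m \<omega>. Yf m (X m \<omega>)) {i, j}"
      by (rule indep_vars_subset) (use that in \<open>auto simp: I_def\<close>)
    have hY: "h m \<omega> = Yf m (X m \<omega>)" if "\<omega> \<in> space M" for m \<omega>
      unfolding h_def Yf_def C_def using that by (auto simp: indicator_def)
    have intY: "integrable M (\<lambda>\<omega>. Yf m (X m \<omega>))" if "m \<in> {i, j}" for m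
    proof -
      have "m \<in> I" using that \<open>i \<in> I\<close> \<open>j \<in> I\<close> by auto
      hence "integrable M (h m)" by (rule h_int)
      moreover have "integrable M (h m) \<longleftrightarrow> integrable M (\<lambda>\<omega>. Yf m (X m \<omega>))"
        by (rule Bochner_Integration.integrable_cong[where f="h m" and g="\<lambda>\<omega>. Yf m (X m \<omega>)"]) (auto simp: hY)
      ultimately show ?thesis by simp
    qed
    have "expectation (\<lambda>\<omega>. h i \<omega> * h j \<omega>) = expectation (\<lambda>\<omega>. \<Prod>m\<in>{i, j}. Yf m (X m \<omega>))"
      using \<open>i \<noteq> j\<close> by (intro Bochner_Integration.integral_cong) (auto simp: hY)
    also have "\<dots> = (\<Prod>m\<in>{i, j}. expectation (\<lambda>\<omega>. Yf m (X m \<omega>)))"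
      by (rule indep_vars_lebesgue_integral[OF _ ind3 intY]) auto
    also have "\<dots> = expectation (\<lambda>\<omega>. Yf i (X i \<omega>)) * expectation (\<lambda>\<omega>. Yf j (X j \<omega>))"
      using \<open>i \<noteq> j\<close> by simp
    also have "expectation (\<lambda>\<omega>. Yf i (X i \<omega>)) = expectation (h i)"
      by (intro Bochner_Integration.integral_cong) (auto simp: hY)
    also have "\<dots> = 0" using Eh[OF \<open>i \<in> I\<close>] .
    finally show ?thesis by simp
  qed
  define W where "W \<omega> = (\<Sum>m\<in>I. h m \<omega>)" for \<omega>
  define S where "S \<omega> = (\<Sum>i\<in>I. \<Sum>j\<in>I. h i \<omega> * h j \<omega>)" for \<omega>
  have iW: "integrable M W" unfolding W_def by (intro Bochner_Integration.integrable_sum h_int)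
  have iS: "integrable M S" unfolding S_def by (intro Bochner_Integration.integrable_sum hh_int)
  have sqW: "(u - W \<omega>)\<^sup>2 = u\<^sup>2 - 2 * u * W \<omega> + S \<omega>" for \<omega>
  proof -
    have "W \<omega> * W \<omega> = S \<omega>" unfolding W_def S_def by (rule sum_product)
    thus ?thesis by (simp add: power2_eq_square algebra_simps)
  qed
  have i1: "integrable M (\<lambda>\<omega>. u\<^sup>2 - 2 * u * W \<omega>)" using iW by auto
  have iQ: "integrable M (\<lambda>\<omega>. (u - W \<omega>)\<^sup>2)" unfolding sqW using i1 iS by (rule Bochner_Integration.integrable_add)
  have EW: "expectation W = 0" unfolding W_def using h_int Eh by (simp add: Bochner_Integration.integral_sum)
  have ES: "expectation S = (\<Sum>i\<in>I. 1/4 - (d i)\<^sup>2)"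
  proof -
    have "expectation S = (\<Sum>i\<in>I. \<Sum>j\<in>I. expectation (\<lambda>\<omega>. h i \<omega> * h j \<omega>))"
      unfolding S_def using hh_int by (simp add: Bochner_Integration.integral_sum Bochner_Integration.integrable_sum)
    also have "\<dots> = (\<Sum>i\<in>I. expectation (\<lambda>\<omega>. h i \<omega> * h i \<omega>))"
    proof (rule sum.cong[OF refl])
      fix i assume i: "i \<in> I"
      have "(\<Sum>j\<in>I. expectation (\<lambda>\<omega>. h i \<omega> * h j \<omega>))
          = expectation (\<lambda>\<omega>. h i \<omega> * h i \<omega>) + (\<Sum>j\<in>I - {i}. expectation (\<lambda>\<omega>. h i \<omega> * h j \<omega>))"
        by (rule sum.remove[OF finI i])
      also have "(\<Sum>j\<in>I - {i}. expectation (\<lambda>\<omega>. h i \<omega> * h j \<omega>)) = 0"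
        using i by (intro sum.neutral) (auto intro!: Ehij)
      finally show "(\<Sum>j\<in>I. expectation (\<lambda>\<omega>. h i \<omega> * h j \<omega>)) = expectation (\<lambda>\<omega>. h i \<omega> * h i \<omega>)" by simp
    qed
    also have "\<dots> = (\<Sum>i\<in>I. 1/4 - (d i)\<^sup>2)" by (rule sum.cong[OF refl]) (rule Ehh)
    finally show ?thesis .
  qed
  have EQ: "expectation (\<lambda>\<omega>. (u - W \<omega>)\<^sup>2) = u\<^sup>2 + (\<Sum>i\<in>I. 1/4 - (d i)\<^sup>2)"
  proof -
    have "expectation (\<lambda>\<omega>. (u - W \<omega>)\<^sup>2) = expectation (\<lambda>\<omega>. u\<^sup>2 - 2 * u * W \<omega>) + expectation S"
      unfolding sqW using i1 iS by (rule Bochner_Integration.integral_add)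
    also have "expectation (\<lambda>\<omega>. u\<^sup>2 - 2 * u * W \<omega>) = u\<^sup>2 - 2 * u * expectation W"
      using iW by (simp add: prob_space)
    finally show ?thesis using EW ES by simp
  qed
  have Cm: "C m \<in> events" if "m \<in> I" for m using Cev[OF that] .
  define Z where "Z \<omega> = (\<Sum>m\<in>I. indicator (C m) \<omega> :: real)" for \<omega>
  have Zm: "Z \<in> borel_measurable M" unfolding Z_def
    by (intro borel_measurable_sum borel_measurable_indicator Cm)
  have Zeq: "real (card {m \<in> {1..N}. sgn (X m \<omega>) = sgn g}) = Z \<omega>" if "\<omega> \<in> space M" for \<omega>
  proof -
    have "real (card {m \<in> I. sgn (X m \<omega>) = sgn g}) = (\<Sum>m\<in>{m \<in> I. sgn (X m \<omega>) = sgn g}. (1::real))" by simp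
    also have "\<dots> = (\<Sum>m\<in>I. if sgn (X m \<omega>) = sgn g then 1 else 0)" using finI by (rule sum.inter_filter)
    also have "\<dots> = Z \<omega>" unfolding Z_def C_def using that by (intro sum.cong) (auto simp: indicator_def)
    finally show ?thesis unfolding I_def .
  qed
  define E2 where "E2 = {\<omega>\<in>space M. real (card {m \<in> {1..N}. sgn (X m \<omega>) = sgn g}) \<le> real N / 2}"
  have E2': "E2 = {\<omega>\<in>space M. Z \<omega> \<le> real N / 2}" unfolding E2_def using Zeq by auto
  have E2ev: "E2 \<in> events" unfolding E2' using Zm by measurable
  have WZ: "W \<omega> = Z \<omega> - (real N / 2 + D)" if "\<omega> \<in> space M" for \<omega>
  proof -
    have "W \<omega> = Z \<omega> - (\<Sum>m\<in>I. p m)" unfolding W_def Z_def h_def by (simp add: sum_subtractf)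
    moreover have "(\<Sum>m\<in>I. p m) = (\<Sum>m\<in>I. d m + 1/2)" unfolding d_def by simp
    moreover have "(\<Sum>m\<in>I. d m + 1/2) = D + real N / 2" unfolding D_def using cardI by (simp add: sum.distrib)
    ultimately show ?thesis by simp
  qed
  have Dp: "D > 0" unfolding D_def using Dpos .
  have uD: "u + D > 0" using u0 Dp by simp
  have pt: "indicator E2 \<omega> \<le> (u - W \<omega>)\<^sup>2 / (u + D)\<^sup>2" if \<omega>: "\<omega> \<in> space M" for \<omega>
  proof (cases "\<omega> \<in> E2")
    case True
    hence "Z \<omega> \<le> real N / 2" unfolding E2' by simp
    hence "u + D \<le> u - W \<omega>" using WZ[OF \<omega>] by simp
    hence "(u + D)\<^sup>2 \<le> (u - W \<omega>)\<^sup>2" using uD by (intro power_mono) auto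
    hence "1 \<le> (u - W \<omega>)\<^sup>2 / (u + D)\<^sup>2" using uD by simp
    thus ?thesis using True by simp
  next
    case False thus ?thesis by simp
  qed
  have "prob E2 = expectation (indicator E2)" using E2ev by simp
  also have "\<dots> \<le> expectation (\<lambda>\<omega>. (u - W \<omega>)\<^sup>2 / (u + D)\<^sup>2)"
  proof (rule Bochner_Integration.integral_mono)
    show "integrable M (indicator E2 :: 'a \<Rightarrow> real)" using E2ev by (intro integrable_real_indicator) (auto simp: less_top[symmetric])
    show "integrable M (\<lambda>\<omega>. (u - W \<omega>)\<^sup>2 / (u + D)\<^sup>2)" using iQ by (rule integrable_divide)
    show "\<And>\<omega>. \<omega> \<in> space M \<Longrightarrow> indicator E2 \<omega> \<le> (u - W \<omega>)\<^sup>2 / (u + D)\<^sup>2" by (rule pt)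
  qed
  also have "\<dots> = expectation (\<lambda>\<omega>. (u - W \<omega>)\<^sup>2) / (u + D)\<^sup>2" by simp
  also have "\<dots> = (u\<^sup>2 + (\<Sum>i\<in>I. 1/4 - (d i)\<^sup>2)) / (u + (\<Sum>i\<in>I. d i))\<^sup>2" unfolding EQ D_def ..
  also have "\<dots> \<le> \<sigma> / (\<bar>g\<bar> * sqrt (real N))" by (rule fin)
  finally show ?thesis unfolding E2_def .
qed

end

theorem mainTheorem6:
  fixes P :: "'a measure" and X :: "nat \<Rightarrow> 'a \<Rightarrow> real"
    and g \<sigma> :: real and M :: nat
  assumes "prob_space P"
    and "g \<noteq> 0" and "\<sigma> > 0" and "M \<ge> 1"
    and "\<And>m. m \<in> {1..M} \<Longrightarrow> X m \<in> borel_measurable P"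
    and "prob_space.indep_vars P (\<lambda>_. borel) X {1..M}"
    and "\<And>m. m \<in> {1..M} \<Longrightarrow> integrable P (X m)"
    and "\<And>m. m \<in> {1..M} \<Longrightarrow> integrable P (\<lambda>\<omega>. (X m \<omega>)\<^sup>2)"
    and "\<And>m. m \<in> {1..M} \<Longrightarrow> prob_space.expectation P (X m) = g"
    and "\<And>m. m \<in> {1..M} \<Longrightarrow> prob_space.variance P (X m) \<le> \<sigma>\<^sup>2"
    and "\<And>m. m \<in> {1..M} \<Longrightarrow> unimodal (distr P borel (\<lambda>\<omega>. X m \<omega> - g))"
    and "\<And>m. m \<in> {1..M} \<Longrightarrow> symmetric0 (distr P borel (\<lambda>\<omega>. X m \<omega> - g))"
  shows "\<bar>g\<bar> * measure P {\<omega> \<in> space P. sgn (\<Sum>m=1..M. sgn (X m \<omega>)) \<noteq> sgn g}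
           \<le> \<sigma> / sqrt (real M)
       \<and> measure P {\<omega> \<in> space P. real (card {m \<in> {1..M}. sgn (X m \<omega>) = sgn g}) \<le> real M / 2}
           \<le> 1 / (sqrt (real M) * (\<bar>g\<bar> / \<sigma>))"
proof -
  note A = assms
  interpret prob_space P by (rule A(1))
  have ga: "\<bar>g\<bar> > 0" using A(2) by simp
  have per: "prob {\<omega>\<in>space P. sgn (X m \<omega>) \<noteq> sgn g} \<le> 1/2
      \<and> g\<^sup>2 * (1/4 - (1/2 - prob {\<omega>\<in>space P. sgn (X m \<omega>) \<noteq> sgn g})\<^sup>2)
         \<le> 4 * \<sigma>\<^sup>2 * (1/2 - prob {\<omega>\<in>space P. sgn (X m \<omega>) \<noteq> sgn g})\<^sup>2" if m: "m \<in> {1..M}" for m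
  proof -
    have Xm[measurable]: "X m \<in> borel_measurable P" using A(5)[OF m] .
    have Ym: "(\<lambda>\<omega>. X m \<omega> - g) \<in> borel_measurable P" by measurable
    have eqsq: "(\<lambda>\<omega>. (X m \<omega> - g)\<^sup>2) = (\<lambda>\<omega>. (X m \<omega>)\<^sup>2 + (g\<^sup>2 - 2 * g * X m \<omega>))"
      by (auto simp: fun_eq_iff power2_eq_square algebra_simps)
    have int2: "integrable P (\<lambda>\<omega>. (X m \<omega> - g)\<^sup>2)"
      unfolding eqsq using A(8)[OF m] A(7)[OF m] by auto
    have V: "expectation (\<lambda>\<omega>. (X m \<omega> - g)\<^sup>2) \<le> \<sigma>\<^sup>2" using A(10)[OF m] A(9)[OF m] by simp
    note sg = single[OF Ym ga A(11)[OF m] A(12)[OF m] int2 V]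
    define q where "q = prob {\<omega>\<in>space P. \<bar>g\<bar> \<le> X m \<omega> - g}"
    have fq: "prob {\<omega>\<in>space P. sgn (X m \<omega>) \<noteq> sgn g} = q"
    proof (cases "g > 0")
      case True
      have "{\<omega>\<in>space P. sgn (X m \<omega>) \<noteq> sgn g} = {\<omega>\<in>space P. X m \<omega> - g \<le> - \<bar>g\<bar>}"
        using True by (auto simp: sgn_if)
      thus ?thesis using sg(1) unfolding q_def by simp
    next
      case False
      hence gn: "g < 0" using A(2) by simp
      have "{\<omega>\<in>space P. sgn (X m \<omega>) \<noteq> sgn g} = {\<omega>\<in>space P. \<bar>g\<bar> \<le> X m \<omega> - g}"
        using gn by (auto simp: sgn_if)
      thus ?thesis unfolding q_def by simp
    qed
    have "\<bar>g\<bar>\<^sup>2 = g\<^sup>2" by simp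
    thus ?thesis using sg(2) sg(3) unfolding fq q_def by simp
  qed
  have main: "prob {\<omega>\<in>space P. real (card {m \<in> {1..M}. sgn (X m \<omega>) = sgn g}) \<le> real M / 2}
           \<le> \<sigma> / (\<bar>g\<bar> * sqrt (real M))"
    by (rule main_prob[OF A(2) A(3) A(4) A(5) A(6)]) (use per in auto)
  have eqr: "1 / (sqrt (real M) * (\<bar>g\<bar> / \<sigma>)) = \<sigma> / (\<bar>g\<bar> * sqrt (real M))"
    using A(3) ga by (simp add: field_simps)
  define E2 where "E2 = {\<omega>\<in>space P. real (card {m \<in> {1..M}. sgn (X m \<omega>) = sgn g}) \<le> real M / 2}"
  have E2ev: "E2 \<in> events"
  proof -
    have [measurable]: "X m \<in> borel_measurable P" if "m \<in> {1..M}" for m using A(5)[OF that] .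
    have "(\<lambda>\<omega>. \<Sum>m\<in>{1..M}. indicator {\<omega>\<in>space P. sgn (X m \<omega>) = sgn g} \<omega> :: real) \<in> borel_measurable P"
      by (intro borel_measurable_sum borel_measurable_indicator) measurable
    moreover have "E2 = {\<omega>\<in>space P. (\<Sum>m\<in>{1..M}. indicator {\<omega>\<in>space P. sgn (X m \<omega>) = sgn g} \<omega> :: real) \<le> real M / 2}"
    proof -
      have "real (card {m \<in> {1..M}. sgn (X m \<omega>) = sgn g})
          = (\<Sum>m\<in>{1..M}. indicator {\<omega>\<in>space P. sgn (X m \<omega>) = sgn g} \<omega> :: real)" if "\<omega> \<in> space P" for \<omega>
      proof -
        have "real (card {m \<in> {1..M}. sgn (X m \<omega>) = sgn g}) = (\<Sum>m\<in>{m \<in> {1..M}. sgn (X m \<omega>) = sgn g}. (1::real))" by simp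
        also have "\<dots> = (\<Sum>m\<in>{1..M}. if sgn (X m \<omega>) = sgn g then 1 else 0)" by (rule sum.inter_filter) simp
        also have "\<dots> = (\<Sum>m\<in>{1..M}. indicator {\<omega>\<in>space P. sgn (X m \<omega>) = sgn g} \<omega> :: real)"
          using that by (intro sum.cong) (auto simp: indicator_def)
        finally show ?thesis .
      qed
      thus ?thesis unfolding E2_def by auto
    qed
    ultimately show ?thesis by (simp only:) measurable
  qed
  have sub: "{\<omega> \<in> space P. sgn (\<Sum>m=1..M. sgn (X m \<omega>)) \<noteq> sgn g} \<subseteq> E2"
  proof
    fix \<omega> assume w: "\<omega> \<in> {\<omega> \<in> space P. sgn (\<Sum>m=1..M. sgn (X m \<omega>)) \<noteq> sgn g}"
    show "\<omega> \<in> E2"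
    proof (rule ccontr)
      assume "\<omega> \<notin> E2"
      hence Zg: "real M / 2 < real (card {m \<in> {1..M}. sgn (X m \<omega>) = sgn g})" using w unfolding E2_def by auto
      define s where "s = sgn g"
      have s: "s = 1 \<or> s = -1" unfolding s_def using A(2) by (auto simp: sgn_if)
      have trm: "(if sgn (X m \<omega>) = s then 2 else 0) - 1 \<le> s * sgn (X m \<omega>)" for m
        using s by (auto simp: sgn_if)
      have "(\<Sum>m=1..M. (if sgn (X m \<omega>) = s then 2 else 0) - 1) \<le> (\<Sum>m=1..M. s * sgn (X m \<omega>))"
        by (intro sum_mono trm)
      moreover have "(\<Sum>m=1..M. (if sgn (X m \<omega>) = s then 2 else (0::real)) - 1)
          = 2 * real (card {m \<in> {1..M}. sgn (X m \<omega>) = s}) - real M"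
      proof -
        have "(\<Sum>m=1..M. (if sgn (X m \<omega>) = s then 2 else (0::real)))
            = (\<Sum>m\<in>{m \<in> {1..M}. sgn (X m \<omega>) = s}. 2)" by (rule sum.inter_filter[symmetric]) simp
        thus ?thesis by (simp add: sum_subtractf)
      qed
      ultimately have "0 < s * (\<Sum>m=1..M. sgn (X m \<omega>))" using Zg unfolding s_def by (simp add: sum_distrib_left)
      hence "sgn (\<Sum>m=1..M. sgn (X m \<omega>)) = s" using s by (auto simp: sgn_if split: if_splits)
      thus False using w unfolding s_def by simp
    qed
  qed
  have "prob {\<omega> \<in> space P. sgn (\<Sum>m=1..M. sgn (X m \<omega>)) \<noteq> sgn g} \<le> prob E2"
    by (rule finite_measure_mono[OF sub E2ev])
  also have "\<dots> \<le> \<sigma> / (\<bar>g\<bar> * sqrt (real M))" using main unfolding E2_def .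
  finally have "\<bar>g\<bar> * prob {\<omega> \<in> space P. sgn (\<Sum>m=1..M. sgn (X m \<omega>)) \<noteq> sgn g} \<le> \<bar>g\<bar> * (\<sigma> / (\<bar>g\<bar> * sqrt (real M)))"
    using ga by (intro mult_left_mono) auto
  also have "\<dots> = \<sigma> / sqrt (real M)" using ga by simp
  finally have c1: "\<bar>g\<bar> * prob {\<omega> \<in> space P. sgn (\<Sum>m=1..M. sgn (X m \<omega>)) \<noteq> sgn g} \<le> \<sigma> / sqrt (real M)" .
  have c2: "prob {\<omega>\<in>space P. real (card {m \<in> {1..M}. sgn (X m \<omega>) = sgn g}) \<le> real M / 2}
           \<le> 1 / (sqrt (real M) * (\<bar>g\<bar> / \<sigma>))" unfolding eqr by (rule main)
  show ?thesis using c1 c2 by blast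
qed

end
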